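(* Consider single-item $s$-unit auctions with $n$ bidders, and valuation profiles $\vec v_1,\dots,\vec v_T\in[0,1]^n$ chosen in advance by an adversary. Let $m=\lceil\sqrt T\rceil$ and run Generalized FTPL over learner actions $\mathcal I_m$ with payoff $f(\vec r,\vec v)=\mathrm{Rev}(\vec r,\vec v)/s\in[0,1]$, translation matrix $\Gamma^{\mathrm{VCG}}$, accuracy $\epsilon=1/\sqrt T$, and $D$ uniform on $[0,1/\eta]$ with $\eta=\sqrt{1/(2(1+2\epsilon)T)}$. Then the auctions $\vec r_1,\dots,\vec r_T$ played satisfy \[ \mathbb E\Big[\max_{\vec r\in\mathcal I}\sum_{t=1}^T\mathrm{Rev}(\vec r,\vec v_t)-\sum_{t=1}^T\mathrm{Rev}(\vec r_t,\vec v_t)\Big]\le O\big(ns\log(T)\sqrt T\big). \]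
   Context: $s$-unit setting: the feasible sets of served bidders are all subsets of $[n]$ of size at most $s$. A VCG auction with bidder-specific reserves $\vec r$: bidders with $v_i<r_i$ are removed; if none remain nothing is allocated; otherwise a welfare-maximizing feasible set among remaining bidders is served and each served bidder pays the larger of $r_i$ and his VCG payment; $\mathrm{Rev}(\vec r,\vec v)\le s$ is the total payment. $\mathcal I$: all such auctions with $\vec r\in[0,1]^n$; $\mathcal I_m$: those with all $r_i\in\{1/m,\dots,m/m\}$. $\Gamma^{\mathrm{VCG}}$: binary matrix with rows indexed by $\vec r\in\mathcal I_m$ and $n\lceil\log_2 m\rceil$ columns, entry in column $(i-1)\lceil\log_2m\rceil+\beta$ being the $\beta$-th bit of the integer $mr_i$. Generalized FTPL with $(\Gamma,D,\epsilon)$: draw $\alpha_1,\dots,\alpha_N$ i.i.d. from $D$ once; at round $t$ play any $x_t$ with $\sum_{\tau<t}f(x_t,y_\tau)+\vec\alpha\cdot\Gamma_{x_t}\ge\sum_{\tau<t}f(x,y_\tau)+\vec\alpha\cdot\Gamma_x-\epsilon$ for all learner actions $x$, where $y_\tau=\vec v_\tau$. *)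

theory Defs
  imports "HOL-Probability.Probability"
begin

(* Bidders are indexed 0,...,n-1; reserve vectors and valuation profiles are
   functions nat => real (entries at indices >= n are irrelevant / fixed to 0). *)

definition opt_welfare :: "nat \<Rightarrow> (nat \<Rightarrow> real) \<Rightarrow> nat set \<Rightarrow> real" where
  "opt_welfare s v A = Max ((\<lambda>B. \<Sum>i\<in>B. v i) ` {B. B \<subseteq> A \<and> card B \<le> s})"

definition remaining :: "nat \<Rightarrow> (nat \<Rightarrow> real) \<Rightarrow> (nat \<Rightarrow> real) \<Rightarrow> nat set" where
  "remaining n r v = {i. i < n \<and> r i \<le> v i}"

definition served :: "nat \<Rightarrow> nat \<Rightarrow> (nat \<Rightarrow> real) \<Rightarrow> (nat \<Rightarrow> real) \<Rightarrow> nat set" where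
  "served s n r v = (SOME S. S \<subseteq> remaining n r v \<and> card S \<le> s \<and>
       (\<Sum>i\<in>S. v i) = opt_welfare s v (remaining n r v))"

definition vcg_pay :: "nat \<Rightarrow> nat \<Rightarrow> (nat \<Rightarrow> real) \<Rightarrow> (nat \<Rightarrow> real) \<Rightarrow> nat \<Rightarrow> real" where
  "vcg_pay s n r v i = opt_welfare s v (remaining n r v - {i})
      - (opt_welfare s v (remaining n r v) - v i)"

definition Rev :: "nat \<Rightarrow> nat \<Rightarrow> (nat \<Rightarrow> real) \<Rightarrow> (nat \<Rightarrow> real) \<Rightarrow> real" where
  "Rev s n r v = (if remaining n r v = {} then 0
      else (\<Sum>i\<in>served s n r v. max (r i) (vcg_pay s n r v i)))"

definition auctions :: "nat \<Rightarrow> (nat \<Rightarrow> real) set" where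
  "auctions n = {r. (\<forall>i<n. 0 \<le> r i \<and> r i \<le> 1) \<and> (\<forall>i\<ge>n. r i = 0)}"

definition auctions_grid :: "nat \<Rightarrow> nat \<Rightarrow> (nat \<Rightarrow> real) set" where
  "auctions_grid n m = {r. (\<forall>i<n. \<exists>k\<in>{1..m}. r i = real k / real m) \<and> (\<forall>i\<ge>n. r i = 0)}"

definition nbits :: "nat \<Rightarrow> nat" where
  "nbits m = nat \<lceil>log 2 (real m)\<rceil>"

text \<open>Translation matrix Gamma^VCG: column j (0-based; column j+1 of the paper) corresponds to
  bidder i = j div L (paper's i = j div L + 1) and bit beta = j mod L + 1, the beta-th least
  significant bit of the integer m * r_i.\<close>
definition GammaVCG :: "nat \<Rightarrow> nat \<Rightarrow> (nat \<Rightarrow> real) \<Rightarrow> nat \<Rightarrow> real" where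
  "GammaVCG n m r j = (if j < n * nbits m then
      real ((nat \<lfloor>real m * r (j div nbits m)\<rfloor> div 2 ^ (j mod nbits m)) mod 2) else 0)"

definition perturb :: "nat \<Rightarrow> nat \<Rightarrow> (nat \<Rightarrow> real) \<Rightarrow> (nat \<Rightarrow> real) \<Rightarrow> real" where
  "perturb n m \<alpha> r = (\<Sum>j<n * nbits m. \<alpha> j * GammaVCG n m r j)"

definition gftpl_step :: "nat \<Rightarrow> nat \<Rightarrow> nat \<Rightarrow> real \<Rightarrow> (nat \<Rightarrow> nat \<Rightarrow> real) \<Rightarrow>
    (nat \<Rightarrow> real) \<Rightarrow> nat \<Rightarrow> (nat \<Rightarrow> real) \<Rightarrow> bool" where
  "gftpl_step n s m eps v \<alpha> t x \<longleftrightarrow> x \<in> auctions_grid n m \<and>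
     (\<forall>x'\<in>auctions_grid n m.
        (\<Sum>\<tau>\<in>{1..<t}. Rev s n x' (v \<tau>) / real s) + perturb n m \<alpha> x' - eps
          \<le> (\<Sum>\<tau>\<in>{1..<t}. Rev s n x (v \<tau>) / real s) + perturb n m \<alpha> x)"

definition alpha_measure :: "nat \<Rightarrow> real \<Rightarrow> (nat \<Rightarrow> real) measure" where
  "alpha_measure N eta = PiM {..<N} (\<lambda>_. uniform_measure lborel {0..1/eta})"

definition regret :: "nat \<Rightarrow> nat \<Rightarrow> nat \<Rightarrow> (nat \<Rightarrow> nat \<Rightarrow> real) \<Rightarrow> (nat \<Rightarrow> nat \<Rightarrow> real) \<Rightarrow> real" where
  "regret n s T v rs = (SUP r\<in>auctions n. \<Sum>t=1..T. Rev s n r (v t))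
      - (\<Sum>t=1..T. Rev s n (rs t) (v t))"

end

theory Submission
  imports Defs
begin


definition Mx :: "(nat \<Rightarrow> real) \<Rightarrow> nat set \<Rightarrow> real" where
  "Mx v X = Max (insert 0 (v ` X))"

lemma opt_fin: "finite A \<Longrightarrow> finite ((\<lambda>B. \<Sum>i\<in>B. v i) ` {B. B \<subseteq> A \<and> card B \<le> s})"
  by (rule finite_imageI) (rule finite_subset[of _ "Pow A"], auto)

lemma opt_ge: "finite A \<Longrightarrow> B \<subseteq> A \<Longrightarrow> card B \<le> s \<Longrightarrow> sum v B \<le> opt_welfare s v A"
  unfolding opt_welfare_def by (rule Max_ge[OF opt_fin]) auto

lemma opt_attained: "finite A \<Longrightarrow> \<exists>B. B \<subseteq> A \<and> card B \<le> s \<and> sum v B = opt_welfare s v A"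
proof -
  assume A: "finite A"
  have "opt_welfare s v A \<in> (\<lambda>B. \<Sum>i\<in>B. v i) ` {B. B \<subseteq> A \<and> card B \<le> s}"
    unfolding opt_welfare_def by (rule Max_in[OF opt_fin[OF A]]) auto
  thus ?thesis by auto
qed

lemma finite_remaining: "finite (remaining n r v)"
  unfolding remaining_def by auto

lemma served_spec:
  "served s n r v \<subseteq> remaining n r v \<and> card (served s n r v) \<le> s \<and>
   sum v (served s n r v) = opt_welfare s v (remaining n r v)"
  unfolding served_def by (rule someI_ex) (rule opt_attained[OF finite_remaining])

lemma dominance:
  assumes A: "finite A" and S: "S \<subseteq> A" "card S \<le> s" "sum v S = opt_welfare s v A"
    and k: "k \<in> S" and j: "j \<in> A - S" and nn: "\<forall>i\<in>A. 0 \<le> v i"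
  shows "v j \<le> v k"
proof (cases "card S = s")
  case True
  have fS: "finite S" using A S finite_subset by blast
  let ?B = "insert j (S - {k})"
  have "card ?B = s" using True fS k j by (simp add: card_Diff_singleton) (metis Suc_pred card_gt_0_iff empty_iff)
  hence "sum v ?B \<le> opt_welfare s v A" using A S j by (intro opt_ge) auto
  moreover have "sum v ?B = sum v S - v k + v j" using fS k j by (simp add: sum_diff1)
  ultimately show ?thesis using S by simp
next
  case False
  have fS: "finite S" using A S finite_subset by blast
  have "card (insert j S) \<le> s" using False S fS j by simp
  hence "sum v (insert j S) \<le> opt_welfare s v A" using A S j by (intro opt_ge) auto
  hence "v j \<le> 0" using fS j S by simp
  thus ?thesis using nn k S by force
qed

lemma small_zero:
  assumes A: "finite A" and S: "S \<subseteq> A" "card S < s" "sum v S = opt_welfare s v A"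
    and j: "j \<in> A - S"
  shows "v j \<le> 0"
proof -
  have fS: "finite S" using A S finite_subset by blast
  have "card (insert j S) \<le> s" using S fS j by simp
  hence "sum v (insert j S) \<le> opt_welfare s v A" using A S j by (intro opt_ge) auto
  thus "v j \<le> 0" using fS j S by simp
qed

lemma Mx_ge0: "finite X \<Longrightarrow> 0 \<le> Mx v X"
  unfolding Mx_def by (rule Max_ge) auto

lemma Mx_ge: "finite X \<Longrightarrow> j \<in> X \<Longrightarrow> v j \<le> Mx v X"
  unfolding Mx_def by (rule Max_ge) auto

lemma Mx_le: "finite X \<Longrightarrow> 0 \<le> c \<Longrightarrow> (\<forall>j\<in>X. v j \<le> c) \<Longrightarrow> Mx v X \<le> c"
  unfolding Mx_def by (subst Max_le_iff) auto

lemma Mx_cases: "finite X \<Longrightarrow> Mx v X = 0 \<or> (\<exists>j\<in>X. Mx v X = v j)"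
proof -
  assume "finite X"
  hence "Mx v X \<in> insert 0 (v ` X)" unfolding Mx_def by (intro Max_in) auto
  thus ?thesis by auto
qed




lemma vcg_eq:
  assumes A: "finite A" and S: "S \<subseteq> A" "card S \<le> s" "sum v S = opt_welfare s v A"
    and i: "i \<in> S" and nn: "\<forall>i\<in>A. 0 \<le> v i"
  shows "opt_welfare s v (A - {i}) = opt_welfare s v A - v i + Mx v (A - S)"
proof -
  have fS: "finite S" using A S finite_subset by blast
  have fAS: "finite (A - S)" using A by auto
  have cS: "card S \<ge> 1" using i fS by (metis One_nat_def Suc_leI card_gt_0_iff empty_iff)
  show ?thesis
  proof (rule antisym)
  obtain B where B: "B \<subseteq> A - {i}" "card B \<le> s" "sum v B = opt_welfare s v (A - {i})"
    using opt_attained[of "A - {i}" s v] A by auto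
  have fB: "finite B" using A B finite_subset by blast
  have iB: "i \<notin> B" using B by auto
  have split1: "sum v B = sum v (B \<inter> S) + sum v (B - S)"
    using fB by (metis Int_Diff_Un Int_Diff_disjoint finite_Diff finite_Int sum.union_disjoint)
  have split2: "sum v S - v i = sum v (B \<inter> S) + sum v (S - B - {i})"
  proof -
    have "S - {i} = (B \<inter> S) \<union> (S - B - {i})" using iB by auto
    moreover have "(B \<inter> S) \<inter> (S - B - {i}) = {}" by auto
    ultimately have "sum v (S - {i}) = sum v (B \<inter> S) + sum v (S - B - {i})"
      using fS by (metis finite_Diff finite_Int sum.union_disjoint)
    thus ?thesis using fS i by (simp add: sum_diff1)
  qed
  show "opt_welfare s v (A - {i}) \<le> opt_welfare s v A - v i + Mx v (A - S)"
  proof (cases "card S = s")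
    case True
    have domS: "\<forall>k\<in>S. Mx v (A - S) \<le> v k"
    proof
      fix k assume k: "k \<in> S"
      show "Mx v (A - S) \<le> v k"
        using fAS dominance[OF A S k _ nn] nn S k by (intro Mx_le) auto
    qed
    have c1: "card B = card (B \<inter> S) + card (B - S)"
      using fB by (metis Int_Diff_Un Int_Diff_disjoint finite_Diff finite_Int card_Un_disjoint)
    have c2: "card (S - {i}) = card (B \<inter> S) + card (S - B - {i})"
    proof -
      have "S - {i} = (B \<inter> S) \<union> (S - B - {i})" using iB by auto
      moreover have "(B \<inter> S) \<inter> (S - B - {i}) = {}" by auto
      ultimately show ?thesis using fS by (metis card_Un_disjoint finite_Diff finite_Int)
    qed
    have c3: "card (S - {i}) = s - 1" using True i fS by simp
    have cc: "card (B - S) \<le> card (S - B - {i}) + 1" using c1 c2 c3 B(2) True cS by linarith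
    have h1: "sum v (B - S) \<le> of_nat (card (B - S)) * Mx v (A - S)"
      using sum_bounded_above[of "B - S" v "Mx v (A - S)"] Mx_ge[OF fAS, of _ v] B by auto
    have h2: "of_nat (card (B - S)) * Mx v (A - S) \<le> of_nat (card (S - B - {i}) + 1) * Mx v (A - S)"
      using cc Mx_ge0[OF fAS, of v] by (intro mult_right_mono) auto
    have h3: "of_nat (card (S - B - {i})) * Mx v (A - S) \<le> sum v (S - B - {i})"
      using sum_bounded_below[of "S - B - {i}" "Mx v (A - S)" v] domS by auto
    have h4: "of_nat (card (S - B - {i}) + 1) * Mx v (A - S) = of_nat (card (S - B - {i})) * Mx v (A - S) + Mx v (A - S)"
      by (simp add: algebra_simps)
    show ?thesis using B(3) split1 split2 h1 h2 h3 h4 S(3) by linarith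
  next
    case False
    hence lt: "card S < s" using S by simp
    have "sum v (B - S) \<le> 0"
      using small_zero[OF A S(1) lt S(3)] B by (intro sum_nonpos) auto
    moreover have "sum v (S - B - {i}) \<ge> 0" using nn S by (intro sum_nonneg) auto
    ultimately show ?thesis using B(3) split1 split2 Mx_ge0[OF fAS, of v] S(3) by linarith
  qed
next
  show "opt_welfare s v A - v i + Mx v (A - S) \<le> opt_welfare s v (A - {i})"
  proof (cases "Mx v (A - S) = 0")
    case True
    have "sum v (S - {i}) \<le> opt_welfare s v (A - {i})"
      using A S by (intro opt_ge) (auto simp: card_Diff_singleton_if fS)
    thus ?thesis using True i fS S by (simp add: sum_diff1)
  next
    case False
    then obtain j where j: "j \<in> A - S" "Mx v (A - S) = v j" using Mx_cases[OF fAS, of v] by auto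
    have "card (insert j (S - {i})) \<le> s" using j S i fS cS
      by (simp add: card_Diff_singleton) 
    hence "sum v (insert j (S - {i})) \<le> opt_welfare s v (A - {i})"
      using A S j i by (intro opt_ge) auto
    thus ?thesis using j i fS S(3) by (simp add: sum_diff1)
  qed
qed
qed




lemma served_sub: "served s n r v \<subseteq> remaining n r v" using served_spec by blast

lemma Rev_formula:
  assumes nn: "\<forall>i<n. 0 \<le> v i"
  shows "Rev s n r v = (\<Sum>i\<in>served s n r v. max (r i) (Mx v (remaining n r v - served s n r v)))"
proof (cases "remaining n r v = {}")
  case True
  hence "served s n r v = {}" using served_sub by blast
  thus ?thesis using True unfolding Rev_def by simp
next
  case False
  have nn': "\<forall>i\<in>remaining n r v. 0 \<le> v i" using nn unfolding remaining_def by auto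
  show ?thesis unfolding Rev_def using False
    by (auto intro!: sum.cong simp: vcg_pay_def vcg_eq[OF finite_remaining served_spec[THEN conjunct1]
        served_spec[THEN conjunct2, THEN conjunct1] served_spec[THEN conjunct2, THEN conjunct2] _ nn'])
qed

lemma served_dom:
  assumes nn: "\<forall>i<n. 0 \<le> v i" and k: "k \<in> served s n r v"
  shows "Mx v (remaining n r v - served s n r v) \<le> v k"
proof -
  have nn': "\<forall>i\<in>remaining n r v. 0 \<le> v i" using nn unfolding remaining_def by auto
  show ?thesis
  proof (rule Mx_le)
    show "finite (remaining n r v - served s n r v)" using finite_remaining by auto
    show "0 \<le> v k" using nn' k served_sub by blast
    show "\<forall>j\<in>remaining n r v - served s n r v. v j \<le> v k"
      using served_spec[of s n r v] dominance[OF finite_remaining, where S="served s n r v" and s=s and v=v and k=k] nn' k by auto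
  qed
qed

definition rnd :: "nat \<Rightarrow> nat \<Rightarrow> (nat \<Rightarrow> real) \<Rightarrow> nat \<Rightarrow> real" where
  "rnd m n r = (\<lambda>i. if i < n then real (max 1 (nat \<lfloor>real m * r i\<rfloor>)) / real m else 0)"

lemma rnd_grid:
  assumes m: "m \<ge> 1" and r: "r \<in> auctions n"
  shows "rnd m n r \<in> auctions_grid n m"
  unfolding auctions_grid_def
proof (safe)
  fix i assume i: "i < n"
  have "0 \<le> r i" "r i \<le> 1" using r i unfolding auctions_def by auto
  hence "real m * r i \<le> real m" using m by (simp add: mult_left_le)
  hence "\<lfloor>real m * r i\<rfloor> \<le> \<lfloor>real m\<rfloor>" by (rule floor_mono)
  hence "nat \<lfloor>real m * r i\<rfloor> \<le> m" by simp
  hence "max 1 (nat \<lfloor>real m * r i\<rfloor>) \<in> {1..m}" using m by auto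
  thus "\<exists>k\<in>{1..m}. rnd m n r i = real k / real m" using i unfolding rnd_def by auto
next
  fix i assume "n \<le> i" thus "rnd m n r i = 0" unfolding rnd_def by auto
qed

lemma rnd_bounds:
  assumes m: "m \<ge> 1" and r: "r \<in> auctions n" and i: "i < n"
  shows "r i - 1 / real m \<le> rnd m n r i" "rnd m n r i \<le> max (r i) (1 / real m)"
proof -
  have r0: "0 \<le> r i" using r i unfolding auctions_def by auto
  have mp: "real m > 0" using m by simp
  have f1: "real m * r i - 1 < of_int \<lfloor>real m * r i\<rfloor>" by linarith
  have f2: "of_int \<lfloor>real m * r i\<rfloor> \<le> real m * r i" by linarith
  have f0: "0 \<le> \<lfloor>real m * r i\<rfloor>" using r0 mp by simp
  have e: "real (nat \<lfloor>real m * r i\<rfloor>) = of_int \<lfloor>real m * r i\<rfloor>" using f0 by simp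
  have "real m * r i - 1 \<le> real (nat \<lfloor>real m * r i\<rfloor>)" using f1 e by linarith
  also have "\<dots> \<le> real (max 1 (nat \<lfloor>real m * r i\<rfloor>))" by simp
  finally have "real m * r i - 1 \<le> real (max 1 (nat \<lfloor>real m * r i\<rfloor>))" .
  hence "(real m * r i - 1) / real m \<le> real (max 1 (nat \<lfloor>real m * r i\<rfloor>)) / real m"
    using mp by (intro divide_right_mono) auto
  moreover have "(real m * r i - 1) / real m = r i - 1 / real m" using mp by (simp add: field_simps)
  ultimately show "r i - 1 / real m \<le> rnd m n r i" unfolding rnd_def using i by simp
  have "real (max 1 (nat \<lfloor>real m * r i\<rfloor>)) \<le> max (real m * r i) 1" using f2 e
    by (cases "nat \<lfloor>real m * r i\<rfloor> \<le> 1") (auto simp: max_def)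
  hence "real (max 1 (nat \<lfloor>real m * r i\<rfloor>)) / real m \<le> max (real m * r i) 1 / real m"
    using mp by (intro divide_right_mono) auto
  moreover have "max (real m * r i) 1 / real m = max (r i) (1 / real m)" using mp
    by (simp add: max_def field_simps)
  ultimately show "rnd m n r i \<le> max (r i) (1 / real m)" unfolding rnd_def using i by simp
qed




lemma round_rev:
  assumes m: "m \<ge> 1" and r: "r \<in> auctions n" and nn: "\<forall>i<n. 0 \<le> v i"
  shows "Rev s n r v \<le> Rev s n (rnd m n r) v + real s / real m"
proof -
  define r' where "r' = rnd m n r"
  define R where "R = remaining n r v"
  define S where "S = served s n r v"
  define R' where "R' = remaining n r' v"
  define S' where "S' = served s n r' v"
  define p where "p = Mx v (R - S)"
  define p' where "p' = Mx v (R' - S')"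
  have mp: "real m > 0" using m by simp
  have fR: "finite R" "finite R'" unfolding R_def R'_def by (rule finite_remaining)+
  have SR: "S \<subseteq> R" "card S \<le> s" "sum v S = opt_welfare s v R"
    unfolding S_def R_def using served_spec by blast+
  have SR': "S' \<subseteq> R'" "card S' \<le> s" "sum v S' = opt_welfare s v R'"
    unfolding S'_def R'_def using served_spec by blast+
  have fS: "finite S" "finite S'" using fR SR SR' finite_subset by blast+
  have Rn: "\<And>i. i \<in> R \<Longrightarrow> i < n \<and> r i \<le> v i" unfolding R_def remaining_def by auto
  have R'n: "\<And>i. i \<in> R' \<Longrightarrow> i < n \<and> r' i \<le> v i" unfolding R'_def remaining_def by auto
  have nnR: "\<forall>i\<in>R. 0 \<le> v i" "\<forall>i\<in>R'. 0 \<le> v i" using Rn R'n nn by auto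
  have rev1: "Rev s n r v = (\<Sum>i\<in>S. max (r i) p)"
    unfolding S_def p_def R_def by (rule Rev_formula[OF nn])
  have rev2: "Rev s n r' v = (\<Sum>i\<in>S'. max (r' i) p')"
    unfolding S'_def p'_def R'_def by (rule Rev_formula[OF nn])
  have p0: "0 \<le> p" "0 \<le> p'" unfolding p_def p'_def using fR by (auto intro!: Mx_ge0)
  have domS: "\<And>k j. k \<in> S \<Longrightarrow> j \<in> R - S \<Longrightarrow> v j \<le> v k"
    using dominance[OF fR(1) SR _ _ nnR(1)] by blast
  have domS': "\<And>k j. k \<in> S' \<Longrightarrow> j \<in> R' - S' \<Longrightarrow> v j \<le> v k"
    using dominance[OF fR(2) SR' _ _ nnR(2)] by blast
  have pv: "\<And>k. k \<in> S \<Longrightarrow> p \<le> v k"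
    unfolding p_def using fR SR nnR domS by (intro Mx_le) auto
  have inR': "\<And>i. i \<in> R \<Longrightarrow> 1 / real m \<le> v i \<Longrightarrow> i \<in> R'"
  proof -
    fix i assume i: "i \<in> R" "1 / real m \<le> v i"
    have "r' i \<le> max (r i) (1 / real m)" unfolding r'_def using rnd_bounds[OF m r] Rn[OF i(1)] by blast
    also have "\<dots> \<le> v i" using Rn[OF i(1)] i(2) by simp
    finally show "i \<in> R'" unfolding R'_def remaining_def using Rn[OF i(1)] by auto
  qed
  have payv: "\<And>i. i \<in> S \<Longrightarrow> max (r i) p \<le> v i" using pv Rn SR by fastforce
  have pp: "p - 1 / real m \<le> p'"
  proof (cases "p \<le> 1 / real m")
    case True thus ?thesis using p0 by simp
  next
    case False
    then obtain j where j: "j \<in> R - S" "p = v j" using Mx_cases[of "R - S" v] fR unfolding p_def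
      by (smt (verit) divide_nonneg_nonneg finite_Diff of_nat_0_le_iff)
    have vj: "v j > 1 / real m" using j False by simp
    have cS: "card S = s"
    proof (rule ccontr)
      assume "card S \<noteq> s" hence "card S < s" using SR by simp
      hence "v j \<le> 0" using small_zero[OF fR(1) SR(1) _ SR(3) j(1)] by simp
      thus False using vj mp by (smt (verit) divide_pos_pos)
    qed
    have sub: "insert j S \<subseteq> R'"
    proof
      fix k assume "k \<in> insert j S"
      hence "k \<in> R" "v j \<le> v k" using j SR domS by auto
      thus "k \<in> R'" using inR' vj by force
    qed
    have "card (insert j S) = s + 1" using cS j fS by simp
    have "\<not> insert j S \<subseteq> S'"
    proof
      assume "insert j S \<subseteq> S'"
      hence "card (insert j S) \<le> card S'" by (rule card_mono[OF fS(2)])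
      thus False using \<open>card (insert j S) = s + 1\<close> SR'(2) by simp
    qed
    then obtain k where k: "k \<in> insert j S" "k \<notin> S'" by blast
    have "v j \<le> v k" using k j domS by auto
    moreover have "v k \<le> p'" unfolding p'_def using k sub fR by (intro Mx_ge) auto
    moreover have "0 \<le> 1 / real m" by simp
    ultimately show ?thesis using j by linarith
  qed
  define q where "q = (if card S' = s then p' else 0)"
  have q0: "0 \<le> q" unfolding q_def using p0 by simp
  have b1: "\<And>i. i \<in> S \<inter> S' \<Longrightarrow> max (r i) p \<le> max (r' i) p' + 1 / real m"
  proof -
    fix i assume i: "i \<in> S \<inter> S'"
    have "r i - 1 / real m \<le> r' i" unfolding r'_def using rnd_bounds[OF m r] Rn SR i by blast
    thus "max (r i) p \<le> max (r' i) p' + 1 / real m" using pp by linarith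
  qed
  have b2: "\<And>i. i \<in> S - S' \<Longrightarrow> max (r i) p \<le> 1 / real m + q"
  proof -
    fix i assume i: "i \<in> S - S'"
    show "max (r i) p \<le> 1 / real m + q"
    proof (cases "i \<in> R'")
      case False
      hence "v i < 1 / real m" using inR' i SR by force
      thus ?thesis using payv i q0 by force
    next
      case True
      have "v i \<le> q"
      proof (cases "card S' = s")
        case True
        thus ?thesis unfolding q_def p'_def using \<open>i \<in> R'\<close> i fR by (auto intro!: Mx_ge)
      next
        case False
        hence "card S' < s" using SR' by simp
        hence "v i \<le> 0" using small_zero[OF fR(2) SR'(1) _ SR'(3)] \<open>i \<in> R'\<close> i by blast
        thus ?thesis using False unfolding q_def by simp
      qed
      moreover have "max (r i) p \<le> v i" using payv i by blast
      moreover have "0 \<le> 1 / real m" by simp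
      ultimately show ?thesis by linarith
    qed
  qed
  have b3: "real (card (S - S')) * q \<le> (\<Sum>i\<in>S' - S. max (r' i) p')"
  proof (cases "card S' = s")
    case False thus ?thesis unfolding q_def using p0 by (simp add: sum_nonneg)
  next
    case True
    have c1: "card S' = card (S' \<inter> S) + card (S' - S)"
      using fS by (metis Int_Diff_Un Int_Diff_disjoint finite_Diff finite_Int card_Un_disjoint)
    have c2: "card S = card (S \<inter> S') + card (S - S')"
      using fS by (metis Int_Diff_Un Int_Diff_disjoint finite_Diff finite_Int card_Un_disjoint)
    have "card (S - S') \<le> card (S' - S)" using c1 c2 True SR(2) by (simp add: Int_commute)
    hence "real (card (S - S')) * q \<le> real (card (S' - S)) * q" using q0 by (intro mult_right_mono) auto
    also have "\<dots> \<le> (\<Sum>i\<in>S' - S. max (r' i) p')"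
      using sum_bounded_below[of "S' - S" q "\<lambda>i. max (r' i) p'"] True unfolding q_def by auto
    finally show ?thesis .
  qed
  have split1: "(\<Sum>i\<in>S. max (r i) p) = (\<Sum>i\<in>S \<inter> S'. max (r i) p) + (\<Sum>i\<in>S - S'. max (r i) p)"
    using fS by (metis Int_Diff_Un Int_Diff_disjoint finite_Diff finite_Int sum.union_disjoint)
  have split2: "(\<Sum>i\<in>S'. max (r' i) p') = (\<Sum>i\<in>S \<inter> S'. max (r' i) p') + (\<Sum>i\<in>S' - S. max (r' i) p')"
    using fS by (metis Int_Diff_Un Int_Diff_disjoint finite_Diff finite_Int sum.union_disjoint Int_commute)
  have s1: "(\<Sum>i\<in>S \<inter> S'. max (r i) p) \<le> (\<Sum>i\<in>S \<inter> S'. max (r' i) p') + real (card (S \<inter> S')) / real m"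
    using sum_mono[of "S \<inter> S'" "\<lambda>i. max (r i) p" "\<lambda>i. max (r' i) p' + 1 / real m", OF b1]
    by (simp add: sum.distrib)
  have s2: "(\<Sum>i\<in>S - S'. max (r i) p) \<le> real (card (S - S')) / real m + real (card (S - S')) * q"
    using sum_mono[of "S - S'" "\<lambda>i. max (r i) p" "\<lambda>i. 1 / real m + q", OF b2]
    by (simp add: sum.distrib distrib_left)
  have c2: "card S = card (S \<inter> S') + card (S - S')"
    using fS by (metis Int_Diff_Un Int_Diff_disjoint finite_Diff finite_Int card_Un_disjoint)
  have "real (card (S \<inter> S')) / real m + real (card (S - S')) / real m = real (card S) / real m"
    using c2 by (simp add: add_divide_distrib)
  also have "\<dots> \<le> real s / real m" using SR(2) mp by (simp add: divide_right_mono)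
  finally have cs: "real (card (S \<inter> S')) / real m + real (card (S - S')) / real m \<le> real s / real m" .
  show ?thesis unfolding rev1 r'_def[symmetric] rev2 using split1 split2 s1 s2 b3 cs by linarith
qed




lemma Rev_bounds:
  assumes v: "\<forall>i<n. 0 \<le> v i \<and> v i \<le> 1"
  shows "0 \<le> Rev s n r v" "Rev s n r v \<le> real s"
proof -
  have nn: "\<forall>i<n. 0 \<le> v i" using v by auto
  let ?S = "served s n r v" and ?R = "remaining n r v"
  have fR: "finite ?R" by (rule finite_remaining)
  have p0: "0 \<le> Mx v (?R - ?S)" using fR by (intro Mx_ge0) auto
  have "0 \<le> (\<Sum>i\<in>?S. max (r i) (Mx v (?R - ?S)))" using p0 by (intro sum_nonneg) auto
  thus "0 \<le> Rev s n r v" using Rev_formula[OF nn] by simp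
  have le1: "\<And>i. i \<in> ?S \<Longrightarrow> max (r i) (Mx v (?R - ?S)) \<le> 1"
  proof -
    fix i assume i: "i \<in> ?S"
    hence iR: "i \<in> ?R" using served_sub by blast
    hence "i < n" "r i \<le> v i" unfolding remaining_def by auto
    moreover have "Mx v (?R - ?S) \<le> v i" using served_dom[OF nn i] .
    ultimately show "max (r i) (Mx v (?R - ?S)) \<le> 1" using v by force
  qed
  have "(\<Sum>i\<in>?S. max (r i) (Mx v (?R - ?S))) \<le> real (card ?S) * 1"
    using sum_bounded_above[of ?S "\<lambda>i. max (r i) (Mx v (?R - ?S))" 1] le1 by auto
  also have "\<dots> \<le> real s" using served_spec[of s n r v] by simp
  finally show "Rev s n r v \<le> real s" using Rev_formula[OF nn] by simp
qed

lemma grid_finite: "finite (auctions_grid n m)"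
proof -
  let ?V = "(\<lambda>k. real k / real m) ` {1..m}"
  have "inj_on (\<lambda>f. restrict f {..<n}) (auctions_grid n m)"
  proof (rule inj_onI)
    fix f g assume f: "f \<in> auctions_grid n m" and g: "g \<in> auctions_grid n m"
      and e: "restrict f {..<n} = restrict g {..<n}"
    show "f = g"
    proof
      fix i show "f i = g i"
      proof (cases "i < n")
        case True thus ?thesis using fun_cong[OF e, of i] by simp
      next
        case False thus ?thesis using f g unfolding auctions_grid_def by auto
      qed
    qed
  qed
  moreover have "(\<lambda>f. restrict f {..<n}) ` auctions_grid n m \<subseteq> PiE {..<n} (\<lambda>_. ?V)"
    unfolding auctions_grid_def by (auto simp: PiE_def Pi_def)
  moreover have "finite (PiE {..<n} (\<lambda>_. ?V))" by (intro finite_PiE) auto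
  ultimately show ?thesis by (meson finite_imageD finite_subset)
qed

lemma Gamma01: "GammaVCG n m r j = 0 \<or> GammaVCG n m r j = 1"
  unfolding GammaVCG_def by auto

lemma Gamma_ge0: "0 \<le> GammaVCG n m r j" "GammaVCG n m r j \<le> 1"
  using Gamma01[of n m r j] by auto

lemma bits_mod:
  fixes a b :: nat
  shows "(\<forall>\<beta><L. (a div 2 ^ \<beta>) mod 2 = (b div 2 ^ \<beta>) mod 2) \<Longrightarrow> a mod 2 ^ L = b mod 2 ^ L"
proof (induction L)
  case 0 thus ?case by simp
next
  case (Suc L)
  have p: "(2::nat) ^ Suc L = 2 ^ L * 2" by simp
  have "a mod 2 ^ Suc L = 2 ^ L * (a div 2 ^ L mod 2) + a mod 2 ^ L"
    unfolding p by (rule mod_mult2_eq)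
  moreover have "b mod 2 ^ Suc L = 2 ^ L * (b div 2 ^ L mod 2) + b mod 2 ^ L"
    unfolding p by (rule mod_mult2_eq)
  ultimately show ?case using Suc by simp
qed

lemma mod_inj_range:
  fixes a b K :: nat
  assumes "1 \<le> a" "a \<le> K" "1 \<le> b" "b \<le> K" "a mod K = b mod K"
  shows "a = b"
proof (cases "a = K")
  case True
  thus ?thesis using assms by (metis le_neq_implies_less mod_less mod_self not_one_le_zero)
next
  case False
  hence "a mod K = a" using assms by simp
  thus ?thesis using assms by (metis le_neq_implies_less mod_less mod_self not_one_le_zero)
qed

lemma nbits_pow: assumes "m \<ge> 1" shows "m \<le> 2 ^ nbits m"
proof -
  have l0: "0 \<le> log 2 (real m)" using assms by simp
  have "real m = 2 powr (log 2 (real m))" using assms by simp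
  also have "\<dots> \<le> 2 powr (real (nat \<lceil>log 2 (real m)\<rceil>))"
  proof (rule powr_mono)
    have "0 \<le> \<lceil>log 2 (real m)\<rceil>" using l0 by linarith
    hence "real (nat \<lceil>log 2 (real m)\<rceil>) = of_int \<lceil>log 2 (real m)\<rceil>" by simp
    thus "log 2 (real m) \<le> real (nat \<lceil>log 2 (real m)\<rceil>)" by linarith
  qed simp
  also have "\<dots> = 2 ^ nat \<lceil>log 2 (real m)\<rceil>" by (simp add: powr_realpow)
  finally show ?thesis unfolding nbits_def by (metis of_nat_le_iff of_nat_numeral of_nat_power)
qed

lemma grid_floor:
  assumes m: "m \<ge> 1" and x: "x \<in> auctions_grid n m" and i: "i < n"
  shows "\<exists>k\<in>{1..m}. x i = real k / real m \<and> nat \<lfloor>real m * x i\<rfloor> = k"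
proof -
  obtain k where k: "k \<in> {1..m}" "x i = real k / real m" using x i unfolding auctions_grid_def by auto
  have "real m * x i = real k" using k m by simp
  thus ?thesis using k by auto
qed

lemma Gamma_inj:
  assumes m: "m \<ge> 1" and x: "x \<in> auctions_grid n m" and y: "y \<in> auctions_grid n m"
    and e: "\<forall>j<n * nbits m. GammaVCG n m x j = GammaVCG n m y j"
  shows "x = y"
proof
  fix i show "x i = y i"
  proof (cases "i < n")
    case False thus ?thesis using x y unfolding auctions_grid_def by auto
  next
    case True
    let ?L = "nbits m"
    obtain a where a: "a \<in> {1..m}" "x i = real a / real m" "nat \<lfloor>real m * x i\<rfloor> = a"
      using grid_floor[OF m x True] by blast
    obtain b where b: "b \<in> {1..m}" "y i = real b / real m" "nat \<lfloor>real m * y i\<rfloor> = b"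
      using grid_floor[OF m y True] by blast
    have "\<forall>\<beta><?L. (a div 2 ^ \<beta>) mod 2 = (b div 2 ^ \<beta>) mod 2"
    proof (intro allI impI)
      fix \<beta> assume \<beta>: "\<beta> < ?L"
      define j where "j = i * ?L + \<beta>"
      have jd: "j div ?L = i" "j mod ?L = \<beta>" unfolding j_def using \<beta> by auto
      have "j < i * ?L + ?L" unfolding j_def using \<beta> by simp
      also have "\<dots> = Suc i * ?L" by simp
      also have "\<dots> \<le> n * ?L" using True by (intro mult_right_mono) auto
      finally have "j < n * ?L" .
      hence "GammaVCG n m x j = GammaVCG n m y j" using e by blast
      thus "(a div 2 ^ \<beta>) mod 2 = (b div 2 ^ \<beta>) mod 2"
        unfolding GammaVCG_def using \<open>j < n * ?L\<close> jd a b by simp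
    qed
    hence "a mod 2 ^ ?L = b mod 2 ^ ?L" by (rule bits_mod)
    hence "a = b" using a b nbits_pow[OF m] by (intro mod_inj_range[of a "2 ^ ?L" b]) auto
    thus ?thesis using a b by simp
  qed
qed




definition Fsum :: "nat \<Rightarrow> nat \<Rightarrow> (nat \<Rightarrow> nat \<Rightarrow> real) \<Rightarrow> nat \<Rightarrow> (nat \<Rightarrow> real) \<Rightarrow> real" where
  "Fsum s n v t x = (\<Sum>\<tau>\<in>{1..<t}. Rev s n x (v \<tau>) / real s)"

lemma step_unfold:
  "gftpl_step n s m eps v \<alpha> t x \<longleftrightarrow> x \<in> auctions_grid n m \<and>
     (\<forall>x'\<in>auctions_grid n m. Fsum s n v t x' + perturb n m \<alpha> x' - eps \<le> Fsum s n v t x + perturb n m \<alpha> x)"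
  unfolding gftpl_step_def Fsum_def ..

lemma Fsum_Suc: "1 \<le> t \<Longrightarrow> Fsum s n v (Suc t) x = Fsum s n v t x + Rev s n x (v t) / real s"
  unfolding Fsum_def by (simp add: sum.atLeastLessThan_Suc)

lemma Fsum_1: "Fsum s n v (Suc 0) x = 0" unfolding Fsum_def by simp

lemma btl:
  assumes step: "\<forall>t\<in>{1..T}. gftpl_step n s m eps v \<alpha> t (X t)"
  shows "k < T \<Longrightarrow> \<forall>x\<in>auctions_grid n m. Fsum s n v (Suc k) x + perturb n m \<alpha> x
     \<le> (\<Sum>t\<in>{1..<Suc k}. Rev s n (X (Suc t)) (v t) / real s) + perturb n m \<alpha> (X 1) + eps * real (Suc k)"
proof (induction k)
  case 0
  have "gftpl_step n s m eps v \<alpha> 1 (X 1)" using step 0 by auto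
  thus ?case unfolding step_unfold using Fsum_1[of s n v] by (simp add: One_nat_def) (smt (verit))
next
  case (Suc k)
  have IH: "\<forall>x\<in>auctions_grid n m. Fsum s n v (Suc k) x + perturb n m \<alpha> x
     \<le> (\<Sum>t\<in>{1..<Suc k}. Rev s n (X (Suc t)) (v t) / real s) + perturb n m \<alpha> (X 1) + eps * real (Suc k)"
    using Suc by simp
  have st: "gftpl_step n s m eps v \<alpha> (Suc (Suc k)) (X (Suc (Suc k)))" using step Suc by auto
  show ?case
  proof
    fix x assume x: "x \<in> auctions_grid n m"
    let ?y = "X (Suc (Suc k))"
    have y: "?y \<in> auctions_grid n m" using st unfolding step_unfold by blast
    have "Fsum s n v (Suc (Suc k)) x + perturb n m \<alpha> x - eps \<le> Fsum s n v (Suc (Suc k)) ?y + perturb n m \<alpha> ?y"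
      using st x unfolding step_unfold by blast
    also have "\<dots> = Fsum s n v (Suc k) ?y + perturb n m \<alpha> ?y + Rev s n ?y (v (Suc k)) / real s"
      by (simp add: Fsum_Suc)
    also have "\<dots> \<le> (\<Sum>t\<in>{1..<Suc k}. Rev s n (X (Suc t)) (v t) / real s) + perturb n m \<alpha> (X 1) + eps * real (Suc k)
       + Rev s n ?y (v (Suc k)) / real s"
      using IH y by simp
    also have "\<dots> = (\<Sum>t\<in>{1..<Suc (Suc k)}. Rev s n (X (Suc t)) (v t) / real s) + perturb n m \<alpha> (X 1) + eps * real (Suc k)"
      by (simp add: sum.atLeastLessThan_Suc)
    finally show "Fsum s n v (Suc (Suc k)) x + perturb n m \<alpha> x
     \<le> (\<Sum>t\<in>{1..<Suc (Suc k)}. Rev s n (X (Suc t)) (v t) / real s) + perturb n m \<alpha> (X 1) + eps * real (Suc (Suc k))"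
      by (simp add: algebra_simps)
  qed
qed

definition Hf :: "nat \<Rightarrow> nat \<Rightarrow> nat \<Rightarrow> (nat \<Rightarrow> nat \<Rightarrow> real) \<Rightarrow> nat \<Rightarrow> nat \<Rightarrow> (nat \<Rightarrow> real) \<Rightarrow> (nat \<Rightarrow> real) \<Rightarrow> real" where
  "Hf n s m v t j \<alpha> x = Fsum s n v t x + (\<Sum>k\<in>{..<n * nbits m} - {j}. \<alpha> k * GammaVCG n m x k)"

definition Cl :: "nat \<Rightarrow> nat \<Rightarrow> nat \<Rightarrow> real \<Rightarrow> (nat \<Rightarrow> real) set" where
  "Cl n m j b = {x \<in> auctions_grid n m. GammaVCG n m x j = b}"

definition cfun :: "nat \<Rightarrow> nat \<Rightarrow> nat \<Rightarrow> (nat \<Rightarrow> nat \<Rightarrow> real) \<Rightarrow> nat \<Rightarrow> nat \<Rightarrow> (nat \<Rightarrow> real) \<Rightarrow> real" where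
  "cfun n s m v t j \<alpha> = Max ((\<lambda>x. Hf n s m v t j \<alpha> x) ` Cl n m j 0) - Max ((\<lambda>x. Hf n s m v t j \<alpha> x) ` Cl n m j 1)"

lemma perturb_split:
  assumes "j < n * nbits m"
  shows "perturb n m \<alpha> x = \<alpha> j * GammaVCG n m x j + (\<Sum>k\<in>{..<n * nbits m} - {j}. \<alpha> k * GammaVCG n m x k)"
  unfolding perturb_def using assms by (subst sum.remove[of _ j]) auto

lemma stability:
  assumes v: "\<forall>t\<in>{1..T}. \<forall>i<n. 0 \<le> v t i \<and> v t i \<le> 1" and s: "s \<ge> 1"
    and st1: "gftpl_step n s m eps v \<alpha> t x" and st2: "gftpl_step n s m eps v \<alpha> (Suc t) x'"
    and t: "1 \<le> t" "t \<le> T" and j: "j < n * nbits m"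
    and d: "GammaVCG n m x j \<noteq> GammaVCG n m x' j"
  shows "Cl n m j 0 \<noteq> {} \<and> Cl n m j 1 \<noteq> {} \<and> \<bar>\<alpha> j - cfun n s m v t j \<alpha>\<bar> \<le> 1 + eps"
proof -
  let ?h = "Hf n s m v t j \<alpha>"
  let ?g = "\<lambda>y. Rev s n y (v t) / real s"
  have xG: "x \<in> auctions_grid n m" and x'G: "x' \<in> auctions_grid n m"
    using st1 st2 unfolding step_unfold by blast+
  have g01: "\<And>y. 0 \<le> ?g y \<and> ?g y \<le> 1"
  proof -
    fix y
    have vt: "\<forall>i<n. 0 \<le> v t i \<and> v t i \<le> 1" using v t by auto
    have "0 \<le> Rev s n y (v t)" "Rev s n y (v t) \<le> real s" using Rev_bounds[OF vt] by auto
    thus "0 \<le> ?g y \<and> ?g y \<le> 1" using s by auto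
  qed
  have o1: "\<And>y. y \<in> auctions_grid n m \<Longrightarrow> ?h y + \<alpha> j * GammaVCG n m y j - eps \<le> ?h x + \<alpha> j * GammaVCG n m x j"
    using st1 unfolding step_unfold Hf_def perturb_split[OF j] by (auto simp: algebra_simps)
  have o2: "\<And>y. y \<in> auctions_grid n m \<Longrightarrow> ?h y + ?g y + \<alpha> j * GammaVCG n m y j - eps \<le> ?h x' + ?g x' + \<alpha> j * GammaVCG n m x' j"
    using st2 t unfolding step_unfold Hf_def perturb_split[OF j] by (auto simp: algebra_simps Fsum_Suc)
  have cases: "(GammaVCG n m x j = 1 \<and> GammaVCG n m x' j = 0) \<or> (GammaVCG n m x j = 0 \<and> GammaVCG n m x' j = 1)"
    using d Gamma01[of n m x j] Gamma01[of n m x' j] by auto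
  hence ne: "Cl n m j 0 \<noteq> {}" "Cl n m j 1 \<noteq> {}" using xG x'G unfolding Cl_def by auto
  have fin: "finite (Cl n m j b)" for b unfolding Cl_def using grid_finite by auto
  define M0 where "M0 = Max (?h ` Cl n m j 0)"
  define M1 where "M1 = Max (?h ` Cl n m j 1)"
  obtain y0 where y0: "y0 \<in> Cl n m j 0" "?h y0 = M0"
    using Max_in[of "?h ` Cl n m j 0"] fin ne unfolding M0_def by fastforce
  obtain y1 where y1: "y1 \<in> Cl n m j 1" "?h y1 = M1"
    using Max_in[of "?h ` Cl n m j 1"] fin ne unfolding M1_def by fastforce
  have le0: "\<And>y. y \<in> Cl n m j 0 \<Longrightarrow> ?h y \<le> M0" unfolding M0_def using fin by auto
  have le1: "\<And>y. y \<in> Cl n m j 1 \<Longrightarrow> ?h y \<le> M1" unfolding M1_def using fin by auto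
  have c: "cfun n s m v t j \<alpha> = M0 - M1" unfolding cfun_def M0_def M1_def ..
  have y0G: "y0 \<in> auctions_grid n m" "GammaVCG n m y0 j = 0" using y0 unfolding Cl_def by auto
  have y1G: "y1 \<in> auctions_grid n m" "GammaVCG n m y1 j = 1" using y1 unfolding Cl_def by auto
  from cases have "\<bar>\<alpha> j - (M0 - M1)\<bar> \<le> 1 + eps"
  proof
    assume a: "GammaVCG n m x j = 1 \<and> GammaVCG n m x' j = 0"
    hence "x \<in> Cl n m j 1" "x' \<in> Cl n m j 0" using xG x'G unfolding Cl_def by auto
    hence "?h x \<le> M1" "?h x' \<le> M0" using le0 le1 by auto
    moreover have "?h y0 - eps \<le> ?h x + \<alpha> j" using o1[OF y0G(1)] y0G a by simp
    moreover have "?h y1 + ?g y1 + \<alpha> j - eps \<le> ?h x' + ?g x'" using o2[OF y1G(1)] y1G a by simp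
    ultimately show ?thesis using g01[of y1] g01[of x'] y0 y1 by (simp add: abs_le_iff)
  next
    assume a: "GammaVCG n m x j = 0 \<and> GammaVCG n m x' j = 1"
    hence "x \<in> Cl n m j 0" "x' \<in> Cl n m j 1" using xG x'G unfolding Cl_def by auto
    hence "?h x \<le> M0" "?h x' \<le> M1" using le0 le1 by auto
    moreover have "?h y1 + \<alpha> j - eps \<le> ?h x" using o1[OF y1G(1)] y1G a by simp
    moreover have "?h y0 + ?g y0 - eps \<le> ?h x' + ?g x' + \<alpha> j" using o2[OF y0G(1)] y0G a by simp
    ultimately show ?thesis using g01[of y0] g01[of x'] y0 y1 by (simp add: abs_le_iff)
  qed
  thus ?thesis using ne c by simp
qed




definition Ewin :: "(nat \<Rightarrow> real) set \<Rightarrow> nat \<Rightarrow> nat \<Rightarrow> nat \<Rightarrow> real \<Rightarrow> (nat \<Rightarrow> nat \<Rightarrow> real) \<Rightarrow> nat \<Rightarrow> nat \<Rightarrow> (nat \<Rightarrow> real) set" where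
  "Ewin \<Omega> n s m eps v t j = {\<alpha> \<in> \<Omega>. Cl n m j 0 \<noteq> {} \<and> Cl n m j 1 \<noteq> {} \<and> \<bar>\<alpha> j - cfun n s m v t j \<alpha>\<bar> \<le> 1 + eps}"

lemma diff_bound:
  assumes v: "\<forall>t\<in>{1..T}. \<forall>i<n. 0 \<le> v t i \<and> v t i \<le> 1" and s: "s \<ge> 1" and m: "m \<ge> 1"
    and st1: "gftpl_step n s m eps v \<alpha> t x" and st2: "gftpl_step n s m eps v \<alpha> (Suc t) x'"
    and t: "1 \<le> t" "t \<le> T" and \<Omega>: "\<alpha> \<in> \<Omega>"
  shows "Rev s n x' (v t) / real s - Rev s n x (v t) / real s
     \<le> (\<Sum>j<n * nbits m. indicator (Ewin \<Omega> n s m eps v t j) \<alpha>)"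
proof (cases "x = x'")
  case True thus ?thesis by (simp add: sum_nonneg)
next
  case False
  have xG: "x \<in> auctions_grid n m" and x'G: "x' \<in> auctions_grid n m"
    using st1 st2 unfolding step_unfold by blast+
  obtain j where j: "j < n * nbits m" "GammaVCG n m x j \<noteq> GammaVCG n m x' j"
    using Gamma_inj[OF m xG x'G] False by blast
  have "\<alpha> \<in> Ewin \<Omega> n s m eps v t j"
    using stability[OF v s st1 st2 t j] \<Omega> unfolding Ewin_def by auto
  hence one: "1 \<le> (\<Sum>j<n * nbits m. indicator (Ewin \<Omega> n s m eps v t j) \<alpha> :: real)"
    using j(1) sum_nonneg_leq_bound[of "{..<n * nbits m}"] 
    by (metis (no_types, lifting) finite_lessThan indicator_pos_le indicator_simps(1) lessThan_iff member_le_sum)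
  have vt: "\<forall>i<n. 0 \<le> v t i \<and> v t i \<le> 1" using v t by auto
  have "Rev s n x' (v t) \<le> real s" "0 \<le> Rev s n x (v t)" using Rev_bounds[OF vt] by auto
  hence "Rev s n x' (v t) / real s - Rev s n x (v t) / real s \<le> 1" using s
    by (simp add: diff_divide_distrib[symmetric])
  thus ?thesis using one by linarith
qed




lemma perturb_bounds:
  assumes "\<forall>k<n * nbits m. 0 \<le> \<alpha> k \<and> \<alpha> k \<le> B"
  shows "0 \<le> perturb n m \<alpha> x" "perturb n m \<alpha> x \<le> real (n * nbits m) * B"
proof -
  show "0 \<le> perturb n m \<alpha> x" unfolding perturb_def using assms Gamma_ge0
    by (intro sum_nonneg) auto
  have "perturb n m \<alpha> x \<le> (\<Sum>k<n * nbits m. B)" unfolding perturb_def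
  proof (rule sum_mono)
    fix k assume "k \<in> {..<n * nbits m}"
    hence "0 \<le> \<alpha> k" "\<alpha> k \<le> B" using assms by auto
    thus "\<alpha> k * GammaVCG n m x k \<le> B" using Gamma_ge0[of n m x k]
      by (metis mult_left_le order_trans)
  qed
  thus "perturb n m \<alpha> x \<le> real (n * nbits m) * B" by simp
qed

lemma pointwise:
  assumes v: "\<forall>t\<in>{1..T}. \<forall>i<n. 0 \<le> v t i \<and> v t i \<le> 1" and s: "s \<ge> 1" and m: "m \<ge> 1"
    and T: "T \<ge> 1"
    and step: "\<forall>t\<in>{1..T}. gftpl_step n s m eps v \<alpha> t (X t)"
    and ab: "\<forall>k<n * nbits m. 0 \<le> \<alpha> k \<and> \<alpha> k \<le> B" and \<Omega>: "\<alpha> \<in> \<Omega>"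
    and r: "r \<in> auctions n"
  shows "(\<Sum>t=1..T. Rev s n r (v t)) \<le> real T * real s / real m + (\<Sum>t=1..T. Rev s n (X t) (v t))
     + real s * (1 + real (n * nbits m) * B + eps * real T
        + (\<Sum>t\<in>{1..<T}. \<Sum>j<n * nbits m. indicator (Ewin \<Omega> n s m eps v t j) \<alpha>))"
proof -
  let ?N = "n * nbits m"
  let ?I = "\<lambda>t. (\<Sum>j<?N. indicator (Ewin \<Omega> n s m eps v t j) \<alpha> :: real)"
  define x where "x = rnd m n r"
  have sp: "real s > 0" using s by simp
  have xG: "x \<in> auctions_grid n m" unfolding x_def by (rule rnd_grid[OF m r])
  have vt: "\<And>t. t \<in> {1..T} \<Longrightarrow> \<forall>i<n. 0 \<le> v t i \<and> v t i \<le> 1" using v by auto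
  have s1: "(\<Sum>t=1..T. Rev s n r (v t)) \<le> (\<Sum>t=1..T. Rev s n x (v t) + real s / real m)"
    unfolding x_def using round_rev[OF m r] vt by (intro sum_mono) auto
  have s1': "(\<Sum>t=1..T. Rev s n x (v t) + real s / real m) = (\<Sum>t=1..T. Rev s n x (v t)) + real T * real s / real m"
    by (simp add: sum.distrib)
  have b: "Fsum s n v (Suc (T - 1)) x + perturb n m \<alpha> x
     \<le> (\<Sum>t\<in>{1..<Suc (T - 1)}. Rev s n (X (Suc t)) (v t) / real s) + perturb n m \<alpha> (X 1) + eps * real (Suc (T - 1))"
    using btl[OF step, of "T - 1"] T xG by auto
  have TT: "Suc (T - 1) = T" using T by simp
  have b': "Fsum s n v T x \<le> (\<Sum>t\<in>{1..<T}. Rev s n (X (Suc t)) (v t) / real s) + real ?N * B + eps * real T"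
    using b perturb_bounds[OF ab, of x] perturb_bounds[OF ab, of "X 1"] unfolding TT by linarith
  have s2: "(\<Sum>t=1..T. Rev s n x (v t)) = real s * Fsum s n v T x + Rev s n x (v T)"
  proof -
    have "(\<Sum>t=1..T. Rev s n x (v t)) = (\<Sum>t\<in>{1..<T}. Rev s n x (v t)) + Rev s n x (v T)"
      using T by (metis Suc_pred' TT le_less_Suc_eq less_eq_Suc_le sum.atLeastLessThan_Suc atLeastLessThanSuc_atLeastAtMost)
    moreover have "real s * Fsum s n v T x = (\<Sum>t\<in>{1..<T}. Rev s n x (v t))"
      unfolding Fsum_def using sp by (simp add: sum_distrib_left)
    ultimately show ?thesis by simp
  qed
  have s3: "Rev s n x (v T) \<le> real s" using Rev_bounds[OF vt[of T]] T by auto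
  have s4: "\<And>t. t \<in> {1..<T} \<Longrightarrow> Rev s n (X (Suc t)) (v t) / real s \<le> Rev s n (X t) (v t) / real s + ?I t"
  proof -
    fix t assume t: "t \<in> {1..<T}"
    have "gftpl_step n s m eps v \<alpha> t (X t)" "gftpl_step n s m eps v \<alpha> (Suc t) (X (Suc t))"
      using step t by auto
    from diff_bound[OF v s m this _ _ \<Omega>] t show "Rev s n (X (Suc t)) (v t) / real s \<le> Rev s n (X t) (v t) / real s + ?I t"
      by auto
  qed
  have s5: "(\<Sum>t\<in>{1..<T}. Rev s n (X (Suc t)) (v t) / real s) \<le> (\<Sum>t\<in>{1..<T}. Rev s n (X t) (v t) / real s) + (\<Sum>t\<in>{1..<T}. ?I t)"
    using sum_mono[of "{1..<T}", OF s4] by (simp add: sum.distrib)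
  have s6: "real s * (\<Sum>t\<in>{1..<T}. Rev s n (X t) (v t) / real s) \<le> (\<Sum>t=1..T. Rev s n (X t) (v t))"
  proof -
    have "real s * (\<Sum>t\<in>{1..<T}. Rev s n (X t) (v t) / real s) = (\<Sum>t\<in>{1..<T}. Rev s n (X t) (v t))"
      using sp by (simp add: sum_distrib_left)
    also have "\<dots> \<le> (\<Sum>t=1..T. Rev s n (X t) (v t))"
      using Rev_bounds(1)[OF vt] by (intro sum_mono2) auto
    finally show ?thesis .
  qed
  have "real s * Fsum s n v T x \<le> real s * ((\<Sum>t\<in>{1..<T}. Rev s n (X t) (v t) / real s) + (\<Sum>t\<in>{1..<T}. ?I t) + real ?N * B + eps * real T)"
    using b' s5 sp by (intro mult_left_mono) auto
  hence "real s * Fsum s n v T x \<le> (\<Sum>t=1..T. Rev s n (X t) (v t)) + real s * ((\<Sum>t\<in>{1..<T}. ?I t) + real ?N * B + eps * real T)"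
    using s6 by (simp add: algebra_simps)
  thus ?thesis using s1 s1' s2 s3 by (simp add: algebra_simps)
qed




lemma U_prob: "eta > 0 \<Longrightarrow> prob_space (uniform_measure lborel {0..1/eta::real})"
  by (intro prob_space_uniform_measure) auto

lemma M_prob: "eta > 0 \<Longrightarrow> prob_space (alpha_measure N eta)"
  unfolding alpha_measure_def by (intro prob_space_PiM U_prob)

lemma comp_meas:
  assumes "j < N" shows "(\<lambda>\<alpha>. \<alpha> j) \<in> borel_measurable (alpha_measure N eta)"
proof -
  have "(\<lambda>\<alpha>. \<alpha> j) \<in> measurable (alpha_measure N eta) (uniform_measure lborel {0..1/eta})"
    unfolding alpha_measure_def using measurable_component_singleton[of j "{..<N}"] assms by auto
  thus ?thesis by (subst measurable_cong_sets[OF refl, where N'="uniform_measure lborel {0..1/eta}"]) auto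
qed

lemma Hf_meas:
  "(\<lambda>\<alpha>. Hf n s m v t j \<alpha> x) \<in> borel_measurable (alpha_measure (n * nbits m) eta)"
  unfolding Hf_def using comp_meas by (intro borel_measurable_add borel_measurable_sum borel_measurable_times) auto

lemma cfun_meas:
  "(\<lambda>\<alpha>. cfun n s m v t j \<alpha>) \<in> borel_measurable (alpha_measure (n * nbits m) eta)"
proof -
  have fin: "finite (Cl n m j b)" for b unfolding Cl_def using grid_finite by auto
  show ?thesis unfolding cfun_def
    using fin Hf_meas by (intro borel_measurable_diff borel_measurable_Max) auto
qed

lemma Ewin_sets:
  assumes j: "j < n * nbits m"
  shows "Ewin (space (alpha_measure (n * nbits m) eta)) n s m eps v t j \<in> sets (alpha_measure (n * nbits m) eta)"
proof (cases "Cl n m j 0 \<noteq> {} \<and> Cl n m j 1 \<noteq> {}")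
  case False thus ?thesis unfolding Ewin_def by auto
next
  case True
  hence e: "Ewin (space (alpha_measure (n * nbits m) eta)) n s m eps v t j =
     {\<alpha> \<in> space (alpha_measure (n * nbits m) eta). \<bar>\<alpha> j - cfun n s m v t j \<alpha>\<bar> \<le> 1 + eps}"
    unfolding Ewin_def by auto
  show ?thesis unfolding e using comp_meas[OF j] cfun_meas
    by (intro borel_measurable_le borel_measurable_abs borel_measurable_diff borel_measurable_const) auto
qed

lemma Hf_upd:
  "Hf n s m v t j (\<alpha>(j := y)) x = Hf n s m v t j \<alpha> x"
  unfolding Hf_def by (intro arg_cong2[where f="(+)"] refl sum.cong) auto

lemma cfun_upd:
  "cfun n s m v t j (\<alpha>(j := y)) = cfun n s m v t j \<alpha>"
  unfolding cfun_def Hf_upd ..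




lemma U_interval:
  assumes eta: "eta > 0" and w: "w \<ge> 0"
  shows "emeasure (uniform_measure lborel {0..1/eta}) {c - w..c + w} \<le> ennreal (2 * w * eta)"
proof -
  have "emeasure (uniform_measure lborel {0..1/eta}) {c - w..c + w}
      = emeasure lborel ({0..1/eta} \<inter> {c - w..c + w}) / emeasure lborel {0..1/eta::real}"
    by (rule emeasure_uniform_measure) auto
  also have "\<dots> \<le> emeasure lborel {c - w..c + w} / emeasure lborel {0..1/eta::real}"
    by (intro divide_right_mono_ennreal emeasure_mono) auto
  also have "\<dots> = ennreal (2 * w) / ennreal (1 / eta)" using w eta by simp
  also have "\<dots> = ennreal (2 * w * eta)" using w eta by (subst divide_ennreal) auto
  finally show ?thesis .
qed

lemma Ewin_emeasure:
  assumes eta: "eta > 0" and eps: "eps \<ge> 0" and j: "j < n * nbits m"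
  shows "emeasure (alpha_measure (n * nbits m) eta) (Ewin (space (alpha_measure (n * nbits m) eta)) n s m eps v t j)
     \<le> ennreal (2 * (1 + eps) * eta)"
proof -
  define N where "N = n * nbits m"
  define U where "U = uniform_measure lborel {0..1/eta}"
  define I' where "I' = {..<N} - {j}"
  define E where "E = Ewin (space (alpha_measure N eta)) n s m eps v t j"
  have jN: "j < N" using j N_def by simp
  interpret U: prob_space U unfolding U_def using U_prob[OF eta] .
  interpret P: product_sigma_finite "\<lambda>_. U"
    unfolding product_sigma_finite_def using U.sigma_finite_measure_axioms by simp
  interpret P': prob_space "PiM I' (\<lambda>_. U)" by (intro prob_space_PiM) (rule U.prob_space_axioms)
  have ins: "{..<N} = insert j I'" unfolding I'_def using jN by auto
  have M: "alpha_measure N eta = PiM (insert j I') (\<lambda>_. U)" unfolding alpha_measure_def U_def ins ..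
  have Es: "E \<in> sets (alpha_measure N eta)" unfolding E_def N_def by (rule Ewin_sets[OF j])
  have "emeasure (alpha_measure N eta) E = (\<integral>\<^sup>+ \<alpha>. indicator E \<alpha> \<partial>(alpha_measure N eta))"
    using Es by simp
  also have "\<dots> = (\<integral>\<^sup>+ \<alpha>. (\<integral>\<^sup>+ y. indicator E (\<alpha>(j := y)) \<partial>U) \<partial>(PiM I' (\<lambda>_. U)))"
    unfolding M by (rule P.product_nn_integral_insert) (use Es M in \<open>auto simp: I'_def\<close>)
  also have "\<dots> \<le> (\<integral>\<^sup>+ \<alpha>. ennreal (2 * (1 + eps) * eta) \<partial>(PiM I' (\<lambda>_. U)))"
  proof (rule nn_integral_mono)
    fix \<alpha> assume "\<alpha> \<in> space (PiM I' (\<lambda>_. U))"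
    let ?c = "cfun n s m v t j \<alpha>"
    have "(\<integral>\<^sup>+ y. indicator E (\<alpha>(j := y)) \<partial>U) \<le> (\<integral>\<^sup>+ y. indicator {?c - (1 + eps)..?c + (1 + eps)} y \<partial>U)"
    proof (rule nn_integral_mono)
      fix y
      have "\<alpha>(j := y) \<in> E \<Longrightarrow> y \<in> {?c - (1 + eps)..?c + (1 + eps)}"
        unfolding E_def Ewin_def by (auto simp: abs_le_iff cfun_upd)
      thus "indicator E (\<alpha>(j := y)) \<le> (indicator {?c - (1 + eps)..?c + (1 + eps)} y :: ennreal)"
        by (auto simp: indicator_def)
    qed
    also have "\<dots> = emeasure U {?c - (1 + eps)..?c + (1 + eps)}"
      by (rule nn_integral_indicator) (simp add: U_def)
    also have "\<dots> \<le> ennreal (2 * (1 + eps) * eta)"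
      unfolding U_def using U_interval[OF eta, of "1 + eps"] eps by simp
    finally show "(\<integral>\<^sup>+ y. indicator E (\<alpha>(j := y)) \<partial>U) \<le> ennreal (2 * (1 + eps) * eta)" .
  qed
  also have "\<dots> = ennreal (2 * (1 + eps) * eta)" using P'.emeasure_space_1 by simp
  finally show ?thesis unfolding E_def N_def .
qed




lemma nbits_bounds:
  assumes T: "T \<ge> 2" and m: "m = nat \<lceil>sqrt (real T)\<rceil>"
  shows "1 \<le> nbits m" "real (nbits m) \<le> 4 * ln (real T)"
proof -
  define q where "q = sqrt (real T)"
  have q1: "q \<ge> sqrt 2" unfolding q_def using T by simp
  have sq2: "sqrt 2 > (1::real)" by simp
  have mq: "real m \<ge> q" "real m < q + 1" unfolding m q_def using q1 sq2 unfolding q_def by linarith+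
  have m2: "m \<ge> 2"
  proof -
    have "real m > 1" using mq q1 sq2 by linarith
    hence "m > 1" by simp
    thus ?thesis by simp
  qed
  have lm1: "log 2 (real m) \<ge> 1" using m2 by simp
  hence c1: "\<lceil>log 2 (real m)\<rceil> \<ge> 1" by linarith
  thus "1 \<le> nbits m" unfolding nbits_def by linarith
  have e: "real (nbits m) = of_int \<lceil>log 2 (real m)\<rceil>" unfolding nbits_def using c1 by simp
  have "real (nbits m) \<le> log 2 (real m) + 1" unfolding e by linarith
  also have "log 2 (real m) \<le> log 2 (2 * q)"
    using mq q1 sq2 m2 by (intro log_le_cancel_iff[THEN iffD2]) auto
  also have "log 2 (2 * q) = 1 + log 2 q" using q1 sq2 by (subst log_mult) auto
  also have "log 2 q = ln (real T) / (2 * ln 2)"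
    unfolding q_def log_def using T by (simp add: ln_sqrt)
  finally have b: "real (nbits m) \<le> 2 + ln (real T) / (2 * ln 2)" by simp
  have l2: "ln (2::real) \<ge> 2/3" by (rule ln2_ge_two_thirds)
  have lT: "ln (real T) \<ge> ln 2" using T by simp
  have lT0: "ln (real T) \<ge> 0" using lT l2 by linarith
  have "ln (real T) / (2 * ln 2) \<le> ln (real T) / (2 * (2/3))"
    using l2 lT0 by (intro divide_left_mono) auto
  moreover have "ln (real T) / (2 * (2/3)) = 3/4 * ln (real T)" by simp
  ultimately have X: "ln (real T) / (2 * ln 2) \<le> 3/4 * ln (real T)" by simp
  have "real (nbits m) \<le> 2 + 3/4 * ln (real T)" using b X by (smt (verit))
  thus "real (nbits m) \<le> 4 * ln (real T)" using lT l2 by linarith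
qed

lemma final_arith:
  assumes T: "T \<ge> 2" and n: "n \<ge> 1" and s: "s \<ge> 1"
    and m: "m = nat \<lceil>sqrt (real T)\<rceil>" and eps: "eps = 1 / sqrt (real T)"
    and eta: "eta = sqrt (1 / (2 * (1 + 2 * eps) * real T))"
  shows "real T * real s / real m + real s * (1 + real (n * nbits m) * (1 / eta) + eps * real T)
     + real s * (real T * (real (n * nbits m) * (2 * (1 + eps) * eta)))
     \<le> 40 * real n * real s * ln (real T) * sqrt (real T)"
proof -
  define q where "q = sqrt (real T)"
  define N where "N = real (n * nbits m)"
  have q1: "q \<ge> 1" unfolding q_def using T by simp
  have qq: "q * q = real T" unfolding q_def by simp
  have mq: "real m \<ge> q" unfolding m q_def by linarith
  have t1: "real T / real m \<le> q"
  proof -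
    have "real T / real m \<le> real T / q" using mq q1 by (intro divide_left_mono) auto
    also have "\<dots> = q" using qq q1 by (simp add: field_simps)
    finally show ?thesis .
  qed
  have e1: "eps * real T = q" unfolding eps q_def[symmetric] using qq q1 by (simp add: field_simps)
  have e0: "0 < eps" "eps \<le> 1" unfolding eps q_def[symmetric] using q1 by auto
  have eta_pos: "eta > 0" unfolding eta using e0 T by simp
  have ieta: "1 / eta \<le> 3 * q"
  proof -
    have "1 / eta = sqrt (2 * (1 + 2 * eps) * real T)" unfolding eta using e0 T
      by (simp add: real_sqrt_divide)
    also have "\<dots> \<le> sqrt (9 * real T)" using e0 T by (intro real_sqrt_le_mono) auto
    also have "\<dots> = 3 * q" unfolding q_def by (simp add: real_sqrt_mult)
    finally show ?thesis .
  qed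
  have etaq: "real T * eta \<le> q"
  proof -
    have "eta \<le> sqrt (1 / real T)" unfolding eta using e0 T
      by (intro real_sqrt_le_mono divide_left_mono) auto
    also have "\<dots> = 1 / q" unfolding q_def by (simp add: real_sqrt_divide)
    finally have "eta \<le> 1 / q" .
    hence "real T * eta \<le> real T * (1 / q)" using T by (intro mult_left_mono) auto
    also have "\<dots> = q" using qq q1 by (simp add: field_simps)
    finally show ?thesis .
  qed
  have nb: "1 \<le> nbits m" "real (nbits m) \<le> 4 * ln (real T)" using nbits_bounds[OF T m] by auto
  have "1 * 1 \<le> n * nbits m" using n nb(1) by (intro mult_le_mono) auto
  hence N1: "N \<ge> 1" unfolding N_def by linarith
  have N4: "N \<le> 4 * real n * ln (real T)" unfolding N_def using nb n by simp
  have sp: "real s \<ge> 1" using s by simp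
  have a1: "real T * real s / real m \<le> real s * q" using t1 sp
    by (metis mult.commute times_divide_eq_right mult_left_mono of_nat_0_le_iff)
  have a2: "N * (1 / eta) \<le> N * (3 * q)" using ieta N1 by (intro mult_left_mono) auto
  have a3: "real T * (N * (2 * (1 + eps) * eta)) \<le> 4 * N * q"
  proof -
    have "real T * (N * (2 * (1 + eps) * eta)) = N * (2 * (1 + eps)) * (real T * eta)" by (simp add: algebra_simps)
    also have "\<dots> \<le> N * 4 * q" using e0 etaq N1 eta_pos T
      by (intro mult_mono) auto
    finally show ?thesis by (simp add: algebra_simps)
  qed
  have b2: "real s * (N * (1 / eta)) \<le> real s * (N * (3 * q))" using mult_left_mono[OF a2, of "real s"] by simp
  have b3: "real s * (real T * (N * (2 * (1 + eps) * eta))) \<le> real s * (4 * N * q)" using mult_left_mono[OF a3, of "real s"] by simp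
  have "real T * real s / real m + real s * (1 + N * (1 / eta) + eps * real T)
     + real s * (real T * (N * (2 * (1 + eps) * eta)))
     \<le> real s * q + real s * (1 + N * (3 * q) + q) + real s * (4 * N * q)"
    using a1 b2 b3 unfolding e1 distrib_left by linarith
  also have "\<dots> \<le> real s * (10 * N * q)"
  proof -
    have qN: "1 * q \<le> N * q" using N1 q1 by (intro mult_right_mono) auto
    have ee: "N * (3 * q) = 3 * (N * q)" "4 * N * q = 4 * (N * q)" "10 * N * q = 10 * (N * q)" by simp_all
    have "1 + N * (3 * q) + q + q + 4 * N * q \<le> 10 * N * q" unfolding ee using qN q1 by linarith
    hence "real s * (1 + N * (3 * q) + q + q + 4 * N * q) \<le> real s * (10 * N * q)"
      using sp by (intro mult_left_mono) auto
    thus ?thesis by (simp add: algebra_simps)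
  qed
  also have "\<dots> \<le> real s * (10 * (4 * real n * ln (real T)) * q)"
    using N4 q1 sp by (intro mult_left_mono mult_right_mono) auto
  also have "\<dots> = 40 * real n * real s * ln (real T) * sqrt (real T)" unfolding q_def by simp
  finally show ?thesis unfolding N_def .
qed




theorem theorem3p3:
  "\<exists>C::real. \<forall>(n::nat) (s::nat) (T::nat) (v::nat \<Rightarrow> nat \<Rightarrow> real)
      (play::(nat \<Rightarrow> real) \<Rightarrow> nat \<Rightarrow> nat \<Rightarrow> real).
     1 \<le> n \<longrightarrow> 1 \<le> s \<longrightarrow> 2 \<le> T \<longrightarrow>
     (\<forall>t\<in>{1..T}. \<forall>i<n. 0 \<le> v t i \<and> v t i \<le> 1) \<longrightarrow>
     (let m = nat \<lceil>sqrt (real T)\<rceil>;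
          eps = 1 / sqrt (real T);
          eta = sqrt (1 / (2 * (1 + 2 * eps) * real T));
          M = alpha_measure (n * nbits m) eta
      in (\<forall>\<alpha>\<in>space M. \<forall>t\<in>{1..T}. gftpl_step n s m eps v \<alpha> t (play \<alpha> t)) \<longrightarrow>
         (\<forall>t\<in>{1..T}. (\<lambda>\<alpha>. Rev s n (play \<alpha> t) (v t)) \<in> borel_measurable M) \<longrightarrow>
         (\<integral>\<alpha>. regret n s T v (play \<alpha>) \<partial>M)
           \<le> C * real n * real s * ln (real T) * sqrt (real T))"
proof (rule exI[of _ 40], intro allI impI)
  fix n s T :: nat and v :: "nat \<Rightarrow> nat \<Rightarrow> real" and play :: "(nat \<Rightarrow> real) \<Rightarrow> nat \<Rightarrow> nat \<Rightarrow> real"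
  assume n: "1 \<le> n" and s: "1 \<le> s" and T: "2 \<le> T" and vb: "\<forall>t\<in>{1..T}. \<forall>i<n. 0 \<le> v t i \<and> v t i \<le> 1"
  define m where "m = nat \<lceil>sqrt (real T)\<rceil>"
  define eps where "eps = 1 / sqrt (real T)"
  define eta where "eta = sqrt (1 / (2 * (1 + 2 * eps) * real T))"
  define N where "N = n * nbits m"
  define M where "M = alpha_measure N eta"
  have main: "(\<forall>\<alpha>\<in>space M. \<forall>t\<in>{1..T}. gftpl_step n s m eps v \<alpha> t (play \<alpha> t)) \<longrightarrow>
         (\<forall>t\<in>{1..T}. (\<lambda>\<alpha>. Rev s n (play \<alpha> t) (v t)) \<in> borel_measurable M) \<longrightarrow>
         (\<integral>\<alpha>. regret n s T v (play \<alpha>) \<partial>M) \<le> 40 * real n * real s * ln (real T) * sqrt (real T)"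
  proof (intro impI)
    assume step: "\<forall>\<alpha>\<in>space M. \<forall>t\<in>{1..T}. gftpl_step n s m eps v \<alpha> t (play \<alpha> t)"
      and meas: "\<forall>t\<in>{1..T}. (\<lambda>\<alpha>. Rev s n (play \<alpha> t) (v t)) \<in> borel_measurable M"
    have sqT: "sqrt (real T) \<ge> 1" using T by simp
    have eps0: "eps > 0" unfolding eps_def using sqT by simp
    have eta0: "eta > 0" unfolding eta_def using eps0 T by simp
    have m1: "m \<ge> 1" unfolding m_def using sqT by linarith
    have T1: "T \<ge> 1" using T by simp
    interpret P: prob_space M unfolding M_def by (rule M_prob[OF eta0])
    define B where "B = 1 / eta"
    define K where "K = real T * real s / real m + real s * (1 + real N * B + eps * real T)"
    define E where "E = (\<lambda>t j. Ewin (space M) n s m eps v t j)"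
    define RHS where "RHS = (\<lambda>\<alpha>. K + real s * (\<Sum>t\<in>{1..<T}. \<Sum>j<N. indicator (E t j) \<alpha> :: real))"
    define c where "c = (SUP r\<in>auctions n. \<Sum>t=1..T. Rev s n r (v t))"
    have vt: "\<And>t. t \<in> {1..T} \<Longrightarrow> \<forall>i<n. 0 \<le> v t i \<and> v t i \<le> 1" using vb by auto
    have Esets: "\<And>t j. j < N \<Longrightarrow> E t j \<in> sets M"
      unfolding E_def M_def N_def by (rule Ewin_sets)
    have Emeas: "\<And>t j. j < N \<Longrightarrow> measure M (E t j) \<le> 2 * (1 + eps) * eta"
    proof -
      fix t j assume j: "j < N"
      have "emeasure M (E t j) \<le> ennreal (2 * (1 + eps) * eta)"
        unfolding E_def M_def N_def using Ewin_emeasure[OF eta0 _ j[unfolded N_def]] eps0 by simp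
      thus "measure M (E t j) \<le> 2 * (1 + eps) * eta"
        using P.emeasure_eq_measure eps0 eta0 by (simp add: ennreal_le_iff)
    qed
    have AEb: "AE \<alpha> in M. \<forall>k\<in>{..<N}. 0 \<le> \<alpha> k \<and> \<alpha> k \<le> B"
    proof (rule AE_finite_allI)
      fix k assume k: "k \<in> {..<N}"
      have "AE x in uniform_measure lborel {0..1/eta}. 0 \<le> x \<and> x \<le> B"
        using eta0 unfolding B_def by (subst AE_uniform_measure) (auto intro!: AE_I2)
      thus "AE \<alpha> in M. 0 \<le> \<alpha> k \<and> \<alpha> k \<le> B"
        unfolding M_def alpha_measure_def using k
        by (intro AE_PiM_component[where P="\<lambda>x. 0 \<le> x \<and> x \<le> B"] U_prob[OF eta0]) auto
    qed simp
    have auc: "auctions n \<noteq> {}"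
    proof -
      have "(\<lambda>_. 0) \<in> auctions n" unfolding auctions_def by auto
      thus ?thesis by blast
    qed
    have pw: "AE \<alpha> in M. regret n s T v (play \<alpha>) \<le> RHS \<alpha>"
      using AEb AE_space
    proof (eventually_elim)
      case (elim \<alpha>)
      have \<alpha>M: "\<alpha> \<in> space M" using elim by simp
      have bnd: "\<forall>k<n * nbits m. 0 \<le> \<alpha> k \<and> \<alpha> k \<le> B" using elim unfolding N_def by auto
      have st: "\<forall>t\<in>{1..T}. gftpl_step n s m eps v \<alpha> t (play \<alpha> t)" using step \<alpha>M by blast
      define S where "S = (\<Sum>t\<in>{1..<T}. \<Sum>j<N. indicator (E t j) \<alpha> :: real)"
      have "c \<le> K + (\<Sum>t=1..T. Rev s n (play \<alpha> t) (v t)) + real s * S"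
        unfolding c_def
      proof (rule cSUP_least[OF auc])
        fix r assume r: "r \<in> auctions n"
        from pointwise[OF vb s m1 T1 st bnd \<alpha>M r]
        show "(\<Sum>t=1..T. Rev s n r (v t)) \<le> K + (\<Sum>t=1..T. Rev s n (play \<alpha> t) (v t)) + real s * S"
          unfolding K_def S_def E_def N_def by (simp add: algebra_simps)
      qed
      thus ?case unfolding regret_def c_def[symmetric] RHS_def S_def by simp
    qed
    have rm: "(\<lambda>\<alpha>. regret n s T v (play \<alpha>)) \<in> borel_measurable M"
    proof -
      have "(\<lambda>\<alpha>. c - (\<Sum>t=1..T. Rev s n (play \<alpha> t) (v t))) \<in> borel_measurable M"
        using meas by (intro borel_measurable_diff borel_measurable_sum borel_measurable_const) auto
      thus ?thesis unfolding regret_def c_def by simp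
    qed
    have int1: "integrable M (\<lambda>\<alpha>. regret n s T v (play \<alpha>))"
    proof (rule P.integrable_const_bound[where B="\<bar>c\<bar> + real T * real s"])
      show "AE \<alpha> in M. norm (regret n s T v (play \<alpha>)) \<le> \<bar>c\<bar> + real T * real s"
      proof (rule AE_I2)
        fix \<alpha>
        have "(\<Sum>t=1..T. Rev s n (play \<alpha> t) (v t)) \<le> (\<Sum>t=1..T. real s)"
          using Rev_bounds(2)[OF vt] by (intro sum_mono) auto
        moreover have "0 \<le> (\<Sum>t=1..T. Rev s n (play \<alpha> t) (v t))"
          using Rev_bounds(1)[OF vt] by (intro sum_nonneg) auto
        ultimately show "norm (regret n s T v (play \<alpha>)) \<le> \<bar>c\<bar> + real T * real s"
          unfolding regret_def c_def[symmetric] by simp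
      qed
    qed (rule rm)
    have Efin: "\<And>t j. j < N \<Longrightarrow> emeasure M (E t j) < \<infinity>"
      by (simp add: P.emeasure_eq_measure)
    have intS: "integrable M (\<lambda>\<alpha>. \<Sum>t\<in>{1..<T}. \<Sum>j<N. indicator (E t j) \<alpha> :: real)"
    proof (rule Bochner_Integration.integrable_sum)
      fix t show "integrable M (\<lambda>\<alpha>. \<Sum>j<N. indicator (E t j) \<alpha> :: real)"
      proof (rule Bochner_Integration.integrable_sum)
        fix j assume "j \<in> {..<N}"
        thus "integrable M (\<lambda>\<alpha>. indicator (E t j) \<alpha> :: real)"
          using Esets Efin by (intro integrable_real_indicator) auto
      qed
    qed
    have int2: "integrable M RHS"
      unfolding RHS_def using intS by (intro Bochner_Integration.integrable_add P.integrable_const integrable_mult_right)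
    have "(\<integral>\<alpha>. regret n s T v (play \<alpha>) \<partial>M) \<le> integral\<^sup>L M RHS"
      by (rule integral_mono_AE[OF int1 int2 pw])
    also have "integral\<^sup>L M RHS = K + real s * (\<Sum>t\<in>{1..<T}. \<Sum>j<N. measure M (E t j))"
    proof -
      have intI: "\<And>t j. j \<in> {..<N} \<Longrightarrow> integrable M (\<lambda>\<alpha>. indicator (E t j) \<alpha> :: real)"
        using Esets Efin by (intro integrable_real_indicator) auto
      have intJ: "\<And>t. t \<in> {1..<T} \<Longrightarrow> integrable M (\<lambda>\<alpha>. \<Sum>j<N. indicator (E t j) \<alpha> :: real)"
        using intI by (intro Bochner_Integration.integrable_sum) auto
      have "integral\<^sup>L M (\<lambda>\<alpha>. \<Sum>t\<in>{1..<T}. \<Sum>j<N. indicator (E t j) \<alpha> :: real)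
          = (\<Sum>t\<in>{1..<T}. integral\<^sup>L M (\<lambda>\<alpha>. \<Sum>j<N. indicator (E t j) \<alpha> :: real))"
        by (rule Bochner_Integration.integral_sum[OF intJ])
      also have "\<dots> = (\<Sum>t\<in>{1..<T}. \<Sum>j<N. integral\<^sup>L M (\<lambda>\<alpha>. indicator (E t j) \<alpha> :: real))"
        by (intro sum.cong refl Bochner_Integration.integral_sum intI)
      also have "\<dots> = (\<Sum>t\<in>{1..<T}. \<Sum>j<N. measure M (E t j))"
        using Esets by (intro sum.cong refl) (simp add: sets.Int_space_eq2)
      finally have iS: "integral\<^sup>L M (\<lambda>\<alpha>. \<Sum>t\<in>{1..<T}. \<Sum>j<N. indicator (E t j) \<alpha> :: real) = (\<Sum>t\<in>{1..<T}. \<Sum>j<N. measure M (E t j))" .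
      have "integral\<^sup>L M RHS = integral\<^sup>L M (\<lambda>\<alpha>. K) + integral\<^sup>L M (\<lambda>\<alpha>. real s * (\<Sum>t\<in>{1..<T}. \<Sum>j<N. indicator (E t j) \<alpha> :: real))"
        unfolding RHS_def using intS by (intro Bochner_Integration.integral_add P.integrable_const integrable_mult_right)
      also have "\<dots> = K + real s * (\<Sum>t\<in>{1..<T}. \<Sum>j<N. measure M (E t j))"
        using iS by (simp add: P.prob_space)
      finally show ?thesis .
    qed
    also have "\<dots> \<le> K + real s * (\<Sum>t\<in>{1..<T}. \<Sum>j<N. 2 * (1 + eps) * eta)"
      using Emeas by (intro add_left_mono mult_left_mono sum_mono) auto
    also have "\<dots> \<le> K + real s * (real T * (real N * (2 * (1 + eps) * eta)))"
    proof -
      have "(\<Sum>t\<in>{1..<T}. \<Sum>j<N. 2 * (1 + eps) * eta) = real (T - 1) * (real N * (2 * (1 + eps) * eta))" by simp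
      also have "\<dots> \<le> real T * (real N * (2 * (1 + eps) * eta))" using eps0 eta0 by (intro mult_right_mono) auto
      finally show ?thesis by (intro add_left_mono mult_left_mono) auto
    qed
    also have "\<dots> \<le> 40 * real n * real s * ln (real T) * sqrt (real T)"
      using final_arith[OF T n s m_def eps_def eta_def] unfolding K_def B_def N_def by simp
    finally show "(\<integral>\<alpha>. regret n s T v (play \<alpha>) \<partial>M) \<le> 40 * real n * real s * ln (real T) * sqrt (real T)" .
  qed
  show "let m = nat \<lceil>sqrt (real T)\<rceil>;
          eps = 1 / sqrt (real T);
          eta = sqrt (1 / (2 * (1 + 2 * eps) * real T));
          M = alpha_measure (n * nbits m) eta
      in (\<forall>\<alpha>\<in>space M. \<forall>t\<in>{1..T}. gftpl_step n s m eps v \<alpha> t (play \<alpha> t)) \<longrightarrow>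
         (\<forall>t\<in>{1..T}. (\<lambda>\<alpha>. Rev s n (play \<alpha> t) (v t)) \<in> borel_measurable M) \<longrightarrow>
         (\<integral>\<alpha>. regret n s T v (play \<alpha>) \<partial>M)
           \<le> 40 * real n * real s * ln (real T) * sqrt (real T)"
    unfolding Let_def using main unfolding M_def N_def eta_def eps_def m_def .
qed


end
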